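(* Let $f=\frac1n\sum_{i=1}^n f_i$ where each $f_i:\mathbb{R}^d\to\mathbb{R}$ is $L$-smooth, and assume moreover that either each $f_i$ is $\mu$-strongly convex for some $\mu>0$, or $\inf_x f(x)>-\infty$. Let the stepsize satisfy $\gamma\le\frac1{Ln}$. Then the iterates of No Full Grad SVRG (described in the context) satisfy, for every epoch $s$, $$f(\omega_{s+1})\le f(\omega_s)-\frac{\gamma n}{2}\|\nabla f(\omega_s)\|^2+\frac{\gamma n}{2}\Big\|\nabla f(\omega_s)-\frac1n\sum_{t=0}^{n-1}v_s^t\Big\|^2.$$
   Context: No Full Grad SVRG: input $x_0^0\in\mathbb{R}^d$, $\omega_0=x_0^0$, $\tilde v_0^0=0$, $v_0=0$, stepsize $\gamma>0$. For epochs $s=0,1,\dots$: choose a permutation $\pi_s^0,\dots,\pi_s^{n-1}$ of the $n$ component indices (by any shuffling rule); for $t=0,\dots,n-1$ set $\tilde v_s^{t+1}=\frac{t}{t+1}\tilde v_s^t+\frac1{t+1}\nabla f_{\pi_s^t}(x_s^t)$, $v_s^t=\nabla f_{\pi_s^t}(x_s^t)-\nabla f_{\pi_s^t}(\omega_s)+v_s$, $x_s^{t+1}=x_s^t-\gamma v_s^t$; then $x_{s+1}^0=x_s^n$, $\omega_{s+1}=x_s^n$, $\tilde v_{s+1}^0=0$, $v_{s+1}=\tilde v_s^n$. *)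

theory Defs
  imports "HOL-Analysis.Analysis" "HOL-Combinatorics.Permutations"
begin

definition grad :: "('a::euclidean_space \<Rightarrow> real) \<Rightarrow> 'a \<Rightarrow> 'a" where
  "grad f x = (THE g. (f has_derivative (\<lambda>h. g \<bullet> h)) (at x))"

definition L_smooth :: "real \<Rightarrow> ('a::euclidean_space \<Rightarrow> real) \<Rightarrow> bool" where
  "L_smooth L f \<longleftrightarrow> (\<forall>x. f differentiable (at x)) \<and>
     (\<forall>x y. norm (grad f x - grad f y) \<le> L * norm (x - y))"

definition strongly_convex :: "real \<Rightarrow> ('a::euclidean_space \<Rightarrow> real) \<Rightarrow> bool" where
  "strongly_convex \<mu> f \<longleftrightarrow> convex_on UNIV (\<lambda>x. f x - \<mu> / 2 * (norm x)\<^sup>2)"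

text \<open>Inner loop of epoch s of No Full Grad SVRG (components indexed 0..n-1).
  Given the reference point omega = omega_s (= x_s^0), the estimate v = v_s and
  the permutation p = pi_s, nfg_inner ... t = (x_s^t, tilde v_s^t).\<close>
fun nfg_inner :: "(nat \<Rightarrow> 'a::euclidean_space \<Rightarrow> real) \<Rightarrow> real \<Rightarrow> (nat \<Rightarrow> nat)
                  \<Rightarrow> 'a \<Rightarrow> 'a \<Rightarrow> nat \<Rightarrow> 'a \<times> 'a" where
  "nfg_inner f \<gamma> p \<omega> v 0 = (\<omega>, 0)"
| "nfg_inner f \<gamma> p \<omega> v (Suc t) =
     (let (x, vt) = nfg_inner f \<gamma> p \<omega> v t;
          g = grad (f (p t)) x
      in (x - \<gamma> *\<^sub>R (g - grad (f (p t)) \<omega> + v),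
          (real t / real (t + 1)) *\<^sub>R vt + (1 / real (t + 1)) *\<^sub>R g))"

text \<open>Epoch-level state (omega_s, v_s); note x_s^0 = omega_s for all s.\<close>
fun nfg_epoch :: "(nat \<Rightarrow> 'a::euclidean_space \<Rightarrow> real) \<Rightarrow> nat \<Rightarrow> real
                  \<Rightarrow> (nat \<Rightarrow> nat \<Rightarrow> nat) \<Rightarrow> 'a \<Rightarrow> nat \<Rightarrow> 'a \<times> 'a" where
  "nfg_epoch f n \<gamma> \<pi> x0 0 = (x0, 0)"
| "nfg_epoch f n \<gamma> \<pi> x0 (Suc s) =
     (let (\<omega>, v) = nfg_epoch f n \<gamma> \<pi> x0 s in nfg_inner f \<gamma> (\<pi> s) \<omega> v n)"

definition nfg_omega where "nfg_omega f n \<gamma> \<pi> x0 s = fst (nfg_epoch f n \<gamma> \<pi> x0 s)"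
definition nfg_v where "nfg_v f n \<gamma> \<pi> x0 s = snd (nfg_epoch f n \<gamma> \<pi> x0 s)"

definition nfg_x where
  "nfg_x f n \<gamma> \<pi> x0 s t =
     fst (nfg_inner f \<gamma> (\<pi> s) (nfg_omega f n \<gamma> \<pi> x0 s) (nfg_v f n \<gamma> \<pi> x0 s) t)"

definition nfg_dir where
  "nfg_dir f n \<gamma> \<pi> x0 s t =
     grad (f (\<pi> s t)) (nfg_x f n \<gamma> \<pi> x0 s t) - grad (f (\<pi> s t)) (nfg_omega f n \<gamma> \<pi> x0 s)
     + nfg_v f n \<gamma> \<pi> x0 s"

end

theory Submission
  imports Defs
begin
lemma grad_exists:
  fixes f :: "'a::euclidean_space \<Rightarrow> real"
  assumes "f differentiable (at x)"
  shows "\<exists>g. (f has_derivative (\<lambda>h. g \<bullet> h)) (at x)"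
proof -
  obtain D where D: "(f has_derivative D) (at x)" using assms differentiable_def by blast
  have lin: "linear D" using D has_derivative_linear by blast
  define g where "g = (\<Sum>b\<in>Basis. D b *\<^sub>R b)"
  have "g \<bullet> h = D h" for h
  proof -
    have "g \<bullet> h = (\<Sum>b\<in>Basis. D b * (b \<bullet> h))"
      unfolding g_def by (simp add: inner_sum_left)
    also have "\<dots> = (\<Sum>b\<in>Basis. (h \<bullet> b) * D b)"
      by (rule sum.cong) (auto simp: inner_commute)
    also have "\<dots> = D (\<Sum>b\<in>Basis. (h \<bullet> b) *\<^sub>R b)"
      using lin by (simp add: linear_sum linear_scale)
    also have "\<dots> = D h" by (simp add: euclidean_representation)
    finally show ?thesis .
  qed
  then have "D = (\<lambda>h. g \<bullet> h)" by auto
  then show ?thesis using D by blast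
qed

lemma grad_unique:
  assumes "(f has_derivative (\<lambda>h. g \<bullet> h)) (at x)" "(f has_derivative (\<lambda>h. g' \<bullet> h)) (at x)"
  shows "g = g'"
proof -
  have "(\<lambda>h. g \<bullet> h) = (\<lambda>h. g' \<bullet> h)" using has_derivative_unique assms by blast
  then have "g \<bullet> (g - g') = g' \<bullet> (g - g')" by metis
  then have "(g - g') \<bullet> (g - g') = 0" by (simp add: inner_diff_left)
  then show ?thesis by simp
qed

lemma grad_eqI:
  assumes "(f has_derivative (\<lambda>h. g \<bullet> h)) (at x)"
  shows "grad f x = g"
  unfolding grad_def using assms grad_unique by blast

lemma grad_works:
  assumes "f differentiable (at x)"
  shows "(f has_derivative (\<lambda>h. grad f x \<bullet> h)) (at x)"
proof -
  obtain g where g: "(f has_derivative (\<lambda>h. g \<bullet> h)) (at x)" using grad_exists assms by blast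
  then show ?thesis using grad_eqI[OF g] by simp
qed

lemma descent:
  fixes F :: "'a::euclidean_space \<Rightarrow> real"
  assumes diff: "\<forall>x. F differentiable (at x)"
    and lip: "\<forall>x y. norm (grad F x - grad F y) \<le> L * norm (x - y)"
  shows "F y \<le> F x + grad F x \<bullet> (y - x) + L / 2 * (norm (y - x))\<^sup>2"
proof -
  define d where "d = y - x"
  define \<phi> where "\<phi> t = F (x + t *\<^sub>R d) - t * (grad F x \<bullet> d) - L / 2 * t^2 * (norm d)^2" for t
  have "\<phi> 1 \<le> \<phi> 0"
  proof (rule DERIV_nonpos_imp_nonincreasing[of 0 1 \<phi>])
    fix t :: real assume t: "0 \<le> t" "t \<le> 1"
    have c: "((\<lambda>t. F (x + t *\<^sub>R d)) has_derivative (\<lambda>h. grad F (x + t *\<^sub>R d) \<bullet> (h *\<^sub>R d))) (at t)"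
      by (rule diff_chain_at[unfolded o_def, where g=F and f="\<lambda>t. x + t *\<^sub>R d", simplified])
         (auto intro!: derivative_eq_intros grad_works diff[rule_format])
    have "(\<phi> has_derivative (\<lambda>h. (grad F (x + t *\<^sub>R d) \<bullet> d - grad F x \<bullet> d - L * t * (norm d)^2) * h)) (at t)"
      unfolding \<phi>_def
      by (rule derivative_eq_intros c | simp)+ (auto simp: algebra_simps)
    then have "DERIV \<phi> t :> (grad F (x + t *\<^sub>R d) \<bullet> d - grad F x \<bullet> d - L * t * (norm d)^2)"
      by (simp add: has_field_derivative_def)
    moreover have "grad F (x + t *\<^sub>R d) \<bullet> d - grad F x \<bullet> d \<le> L * t * (norm d)^2"
    proof -
      have "grad F (x + t *\<^sub>R d) \<bullet> d - grad F x \<bullet> d = (grad F (x + t *\<^sub>R d) - grad F x) \<bullet> d"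
        by (simp add: inner_diff_left)
      also have "\<dots> \<le> norm (grad F (x + t *\<^sub>R d) - grad F x) * norm d"
        by (rule norm_cauchy_schwarz)
      also have "\<dots> \<le> L * norm (t *\<^sub>R d) * norm d"
        using lip[rule_format, of "x + t *\<^sub>R d" x] by (simp add: mult_right_mono)
      also have "\<dots> = L * t * (norm d)^2" using t by (simp add: power2_eq_square)
      finally show ?thesis .
    qed
    ultimately show "\<exists>y. DERIV \<phi> t :> y \<and> y \<le> 0" by (intro exI conjI) auto
  qed simp
  then show ?thesis unfolding \<phi>_def d_def by simp
qed
lemma inner_fst:
  "fst (nfg_inner f \<gamma> p \<omega> v t) = \<omega> - \<gamma> *\<^sub>R (\<Sum>k<t. grad (f (p k)) (fst (nfg_inner f \<gamma> p \<omega> v k)) - grad (f (p k)) \<omega> + v)"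
  by (induction t) (simp_all add: split_beta Let_def algebra_simps)

lemma omega_Suc:
  "nfg_omega f n \<gamma> \<pi> x0 (Suc s) = nfg_omega f n \<gamma> \<pi> x0 s - \<gamma> *\<^sub>R (\<Sum>t<n. nfg_dir f n \<gamma> \<pi> x0 s t)"
proof -
  have "nfg_omega f n \<gamma> \<pi> x0 (Suc s) = fst (nfg_inner f \<gamma> (\<pi> s) (nfg_omega f n \<gamma> \<pi> x0 s) (nfg_v f n \<gamma> \<pi> x0 s) n)"
    unfolding nfg_omega_def nfg_v_def by (simp add: split_beta)
  then show ?thesis by (subst (asm) inner_fst) (simp add: nfg_dir_def nfg_x_def)
qed

theorem lemma5:
  fixes f :: "nat \<Rightarrow> 'a::euclidean_space \<Rightarrow> real"
    and n :: nat and L \<gamma> :: real and \<pi> :: "nat \<Rightarrow> nat \<Rightarrow> nat" and x0 :: 'a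
    and F :: "'a \<Rightarrow> real"
  assumes n_pos: "n \<ge> 1"
    and F_def: "F = (\<lambda>x. (1 / real n) * (\<Sum>i<n. f i x))"
    and smooth: "\<forall>i<n. L_smooth L (f i)"
    and strong_or_bdd: "(\<exists>\<mu>>0. \<forall>i<n. strongly_convex \<mu> (f i)) \<or> bdd_below (range F)"
    and gamma_pos: "\<gamma> > 0"
    and gamma_le: "\<gamma> \<le> 1 / (L * real n)"
    and perm: "\<forall>s. \<pi> s permutes {..<n}"
  shows "F (nfg_omega f n \<gamma> \<pi> x0 (Suc s))
           \<le> F (nfg_omega f n \<gamma> \<pi> x0 s)
              - \<gamma> * real n / 2 * (norm (grad F (nfg_omega f n \<gamma> \<pi> x0 s)))\<^sup>2
              + \<gamma> * real n / 2 * (norm (grad F (nfg_omega f n \<gamma> \<pi> x0 s)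
                   - (1 / real n) *\<^sub>R (\<Sum>t<n. nfg_dir f n \<gamma> \<pi> x0 s t)))\<^sup>2"
proof -
  define \<omega> where "\<omega> = nfg_omega f n \<gamma> \<pi> x0 s"
  define G where "G = (\<Sum>t<n. nfg_dir f n \<gamma> \<pi> x0 s t)"
  have dif: "\<And>i x. i < n \<Longrightarrow> f i differentiable (at x)" using smooth unfolding L_smooth_def by blast
  have lipi: "\<And>i x y. i < n \<Longrightarrow> norm (grad (f i) x - grad (f i) y) \<le> L * norm (x - y)"
    using smooth unfolding L_smooth_def by blast
  have Fder: "(F has_derivative (\<lambda>h. ((1 / real n) *\<^sub>R (\<Sum>i<n. grad (f i) x)) \<bullet> h)) (at x)" for x
  proof -
    have "((\<lambda>x. (\<Sum>i<n. f i x)) has_derivative (\<lambda>h. (\<Sum>i<n. grad (f i) x \<bullet> h))) (at x)"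
      by (rule has_derivative_sum) (simp add: grad_works dif)
    then have "((\<lambda>x. (1 / real n) * (\<Sum>i<n. f i x)) has_derivative (\<lambda>h. (1 / real n) * (\<Sum>i<n. grad (f i) x \<bullet> h))) (at x)"
      by (rule has_derivative_mult_right)
    then show ?thesis unfolding F_def by (simp add: inner_sum_left)
  qed
  have gradF: "grad F x = (1 / real n) *\<^sub>R (\<Sum>i<n. grad (f i) x)" for x
    using grad_eqI[OF Fder] .
  have Fdiff: "\<forall>x. F differentiable (at x)" using Fder differentiable_def by blast
  have Flip: "\<forall>x y. norm (grad F x - grad F y) \<le> L * norm (x - y)"
  proof (intro allI)
    fix x y
    have "grad F x - grad F y = (1 / real n) *\<^sub>R (\<Sum>i<n. grad (f i) x - grad (f i) y)"
      by (simp add: gradF sum_subtractf scaleR_diff_right)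
    then have "norm (grad F x - grad F y) = (1 / real n) * norm (\<Sum>i<n. grad (f i) x - grad (f i) y)"
      by simp
    also have "\<dots> \<le> (1 / real n) * (\<Sum>i<n. L * norm (x - y))"
      proof (rule mult_left_mono)
      show "norm (\<Sum>i<n. grad (f i) x - grad (f i) y) \<le> (\<Sum>i<n. L * norm (x - y))"
        using norm_sum[of "\<lambda>i. grad (f i) x - grad (f i) y" "{..<n}"] sum_mono[of "{..<n}" "\<lambda>i. norm (grad (f i) x - grad (f i) y)" "\<lambda>i. L * norm (x - y)"] lipi
        by (meson lessThan_iff order_trans)
    qed simp
    also have "\<dots> = L * norm (x - y)" using n_pos by simp
    finally show "norm (grad F x - grad F y) \<le> L * norm (x - y)" .
  qed
  have Lpos: "L > 0"
  proof (rule ccontr)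
    assume "\<not> L > 0"
    then have "L * real n \<le> 0" by (simp add: mult_nonpos_nonneg)
    then have "1 / (L * real n) \<le> 0" by (simp add: divide_nonpos_nonneg divide_le_0_iff)
    then show False using gamma_pos gamma_le by linarith
  qed
  have key: "L * \<gamma> * real n \<le> 1"
    using gamma_le Lpos n_pos by (simp add: field_simps)
  define a where "a = grad F \<omega>"
  define g where "g = (1 / real n) *\<^sub>R G"
  have Gg: "\<gamma> *\<^sub>R G = (\<gamma> * real n) *\<^sub>R g" using n_pos by (simp add: g_def)
  have om: "nfg_omega f n \<gamma> \<pi> x0 (Suc s) = \<omega> - (\<gamma> * real n) *\<^sub>R g"
  proof -
    have "nfg_omega f n \<gamma> \<pi> x0 (Suc s) = \<omega> - \<gamma> *\<^sub>R G"
      unfolding \<omega>_def G_def by (rule omega_Suc)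
    then show ?thesis using Gg by simp
  qed
  have "F (\<omega> - (\<gamma> * real n) *\<^sub>R g) \<le> F \<omega> + a \<bullet> (- ((\<gamma> * real n) *\<^sub>R g)) + L / 2 * (norm (- ((\<gamma> * real n) *\<^sub>R g)))\<^sup>2"
    using descent[OF Fdiff Flip, of "\<omega> - (\<gamma> * real n) *\<^sub>R g" \<omega>] unfolding a_def by simp
  also have "\<dots> = F \<omega> - (\<gamma> * real n) * (a \<bullet> g) + (L * \<gamma> * real n) * (\<gamma> * real n) / 2 * (norm g)\<^sup>2"
    using gamma_pos by (simp add: power_mult_distrib power2_eq_square)
  also have "\<dots> \<le> F \<omega> - (\<gamma> * real n) * (a \<bullet> g) + (\<gamma> * real n) / 2 * (norm g)\<^sup>2"
  proof -
    have "(L * \<gamma> * real n) * ((\<gamma> * real n) / 2 * (norm g)\<^sup>2) \<le> 1 * ((\<gamma> * real n) / 2 * (norm g)\<^sup>2)"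
      using key gamma_pos by (intro mult_right_mono) auto
    then show ?thesis by simp
  qed
  also have "\<dots> = F \<omega> - \<gamma> * real n / 2 * (norm a)\<^sup>2 + \<gamma> * real n / 2 * (norm (a - g))\<^sup>2"
    by (simp add: power2_norm_eq_inner inner_diff_left inner_diff_right inner_commute algebra_simps)
  finally show ?thesis using om unfolding a_def g_def G_def \<omega>_def by simp
qed

end
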